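(* Let $\varphi$ be an Orlicz integrand. Then $C^\sigma_\varphi(\mu)\subset E^\sigma_\varphi(\mu)$. If $\varphi$ is real-valued, then the integrable simple functions (measurable, finitely-valued, vanishing outside a set of finite measure) are dense in $C^\sigma_\varphi(\mu)$.
   Context: $(\Omega,\mathcal{A},\mu)$ measure space with nontrivial positive measure, $X$ real Banach space. Orlicz integrand: $\varphi\colon\Omega\times X\to[0,\infty]$ with $\varphi(\omega,\cdot)$ even, convex, lsc, proper, $\varphi(\omega,x)\to0$ as $x\to0$, $\varphi(\omega,x)\to\infty$ as $\|x\|\to\infty$ for a.e. $\omega$, and restriction to $A\times W$ being $\mathcal{A}(A)\otimes\mathcal{B}(W)$-measurable for every set $A$ that is a union of countably many atoms and a $\sigma$-finite set and every separable $W\subset X$; real-valued means $\varphi(\omega,x)<\infty$ for all $x$ and a.e. $\omega$. $L_\varphi(\mu)$: a.e.-classes of strongly measurable $u$ with finite Luxemburg norm $\|u\|_\varphi=\inf\{\alpha>0:\int\varphi(\omega,u/\alpha)d\mu\le1\}$. $C^\sigma_\varphi(\mu)$: $u\in L_\varphi(\mu)$ vanishing outside a $\sigma$-finite set with $\|u\chi_{E_n}\|_\varphi\to0$ for every $E_n\in\mathcal{A}$ with $\chi_{E_n}\to0$ a.e. $E_\varphi(\mu)$: closure in $L_\varphi(\mu)$ of the simple functions belonging to $L_\varphi(\mu)$; $E^\sigma_\varphi(\mu)$: its elements vanishing outside a $\sigma$-finite set. *)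

theory Defs
  imports "HOL-Analysis.Analysis"
begin

definition is_atom :: "'a measure \<Rightarrow> 'a set \<Rightarrow> bool" where
  "is_atom M A \<longleftrightarrow> A \<in> sets M \<and> emeasure M A > 0 \<and>
     (\<forall>B \<in> sets M. B \<subseteq> A \<longrightarrow> emeasure M B = 0 \<or> emeasure M (A - B) = 0)"

definition sigma_finite_set :: "'a measure \<Rightarrow> 'a set \<Rightarrow> bool" where
  "sigma_finite_set M S \<longleftrightarrow> (\<exists>F :: nat \<Rightarrow> 'a set.
     (\<forall>n. F n \<in> sets M \<and> emeasure M (F n) < \<infinity>) \<and> S = (\<Union>n. F n))"

definition atoms_sigma_set :: "'a measure \<Rightarrow> 'a set \<Rightarrow> bool" where
  "atoms_sigma_set M A \<longleftrightarrow> (\<exists>\<A> S. countable \<A> \<and> (\<forall>B\<in>\<A>. is_atom M B) \<and>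
     sigma_finite_set M S \<and> A = \<Union>\<A> \<union> S)"

definition orlicz_integrand :: "'a measure \<Rightarrow> ('a \<Rightarrow> 'b::banach \<Rightarrow> ennreal) \<Rightarrow> bool" where
  "orlicz_integrand M \<phi> \<longleftrightarrow>
    (AE \<omega> in M.
        (\<forall>x. \<phi> \<omega> (- x) = \<phi> \<omega> x) \<and>
        (\<forall>x y (t::real). 0 \<le> t \<and> t \<le> 1 \<longrightarrow>
            \<phi> \<omega> (t *\<^sub>R x + (1 - t) *\<^sub>R y) \<le> ennreal t * \<phi> \<omega> x + ennreal (1 - t) * \<phi> \<omega> y) \<and>
        (\<forall>c. closed {x. \<phi> \<omega> x \<le> c}) \<and>
        (\<exists>x. \<phi> \<omega> x < \<infinity>) \<and>
        ((\<phi> \<omega> \<longlongrightarrow> 0) (at 0)) \<and>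
        ((\<phi> \<omega> \<longlongrightarrow> \<infinity>) at_infinity)) \<and>
    (\<forall>A W. atoms_sigma_set M A \<and> A \<subseteq> space M \<and> separable_space (top_of_set W) \<longrightarrow>
        (\<lambda>(\<omega>, x). \<phi> \<omega> x) \<in>
          borel_measurable (restrict_space M A \<Otimes>\<^sub>M restrict_space borel W))"

definition real_valued_integrand :: "'a measure \<Rightarrow> ('a \<Rightarrow> 'b \<Rightarrow> ennreal) \<Rightarrow> bool" where
  "real_valued_integrand M \<phi> \<longleftrightarrow> (AE \<omega> in M. \<forall>x. \<phi> \<omega> x < \<infinity>)"

definition strongly_measurable :: "'a measure \<Rightarrow> ('a \<Rightarrow> 'b::banach) \<Rightarrow> bool" where
  "strongly_measurable M u \<longleftrightarrow> (\<exists>s :: nat \<Rightarrow> 'a \<Rightarrow> 'b.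
     (\<forall>n. simple_function M (s n)) \<and> (AE \<omega> in M. (\<lambda>n. s n \<omega>) \<longlonglongrightarrow> u \<omega>))"

(* Luxemburg norm (value \<infinity> if the defining set is empty) *)
definition lux_norm :: "'a measure \<Rightarrow> ('a \<Rightarrow> 'b::banach \<Rightarrow> ennreal) \<Rightarrow> ('a \<Rightarrow> 'b) \<Rightarrow> ennreal" where
  "lux_norm M \<phi> u = Inf {ennreal \<alpha> | \<alpha>. \<alpha> > 0 \<and>
       (\<integral>\<^sup>+ \<omega>. \<phi> \<omega> ((1 / \<alpha>) *\<^sub>R u \<omega>) \<partial>M) \<le> 1}"

(* L_phi (as a set of representatives) *)
definition L_phi :: "'a measure \<Rightarrow> ('a \<Rightarrow> 'b::banach \<Rightarrow> ennreal) \<Rightarrow> ('a \<Rightarrow> 'b) set" where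
  "L_phi M \<phi> = {u. strongly_measurable M u \<and> lux_norm M \<phi> u < \<infinity>}"

definition vanishes_outside_sigma_finite :: "'a measure \<Rightarrow> ('a \<Rightarrow> 'b::zero) \<Rightarrow> bool" where
  "vanishes_outside_sigma_finite M u \<longleftrightarrow>
     (\<exists>S. sigma_finite_set M S \<and> (AE \<omega> in M. \<omega> \<notin> S \<longrightarrow> u \<omega> = 0))"

definition C_sigma_phi :: "'a measure \<Rightarrow> ('a \<Rightarrow> 'b::banach \<Rightarrow> ennreal) \<Rightarrow> ('a \<Rightarrow> 'b) set" where
  "C_sigma_phi M \<phi> = {u. u \<in> L_phi M \<phi> \<and> vanishes_outside_sigma_finite M u \<and>
     (\<forall>E :: nat \<Rightarrow> 'a set. (\<forall>n. E n \<in> sets M) \<and>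
         (AE \<omega> in M. (\<lambda>n. indicator (E n) \<omega> :: real) \<longlonglongrightarrow> 0) \<longrightarrow>
         (\<lambda>n. lux_norm M \<phi> (\<lambda>\<omega>. indicator (E n) \<omega> *\<^sub>R u \<omega>)) \<longlonglongrightarrow> 0)}"

definition E_phi :: "'a measure \<Rightarrow> ('a \<Rightarrow> 'b::banach \<Rightarrow> ennreal) \<Rightarrow> ('a \<Rightarrow> 'b) set" where
  "E_phi M \<phi> = {u. u \<in> L_phi M \<phi> \<and> (\<exists>s :: nat \<Rightarrow> 'a \<Rightarrow> 'b.
     (\<forall>n. simple_function M (s n) \<and> s n \<in> L_phi M \<phi>) \<and>
     (\<lambda>n. lux_norm M \<phi> (\<lambda>\<omega>. u \<omega> - s n \<omega>)) \<longlonglongrightarrow> 0)}"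

definition E_sigma_phi :: "'a measure \<Rightarrow> ('a \<Rightarrow> 'b::banach \<Rightarrow> ennreal) \<Rightarrow> ('a \<Rightarrow> 'b) set" where
  "E_sigma_phi M \<phi> = {u \<in> E_phi M \<phi>. vanishes_outside_sigma_finite M u}"

definition integrable_simple :: "'a measure \<Rightarrow> ('a \<Rightarrow> 'b::zero) \<Rightarrow> bool" where
  "integrable_simple M s \<longleftrightarrow> simple_function M s \<and>
     (\<exists>F \<in> sets M. emeasure M F < \<infinity> \<and> (\<forall>\<omega> \<in> space M - F. s \<omega> = 0))"

end

theory Submission
  imports Defs
begin


lemma sep_closure:
  fixes C :: "'b::metric_space set"
  assumes "countable C"
  shows "separable_space (top_of_set (closure C))"
  unfolding separable_space_def
  apply (rule exI[of _ C])
  using assms closure_subset[of C]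
  by (auto simp: closure_of_subtopology_open euclidean_closure_of)

lemma sm_simple: "simple_function M s \<Longrightarrow> strongly_measurable M s"
  unfolding strongly_measurable_def by (rule exI[of _ "\<lambda>n. s"]) auto

lemma sm_add:
  assumes "strongly_measurable M f" "strongly_measurable M g"
  shows "strongly_measurable M (\<lambda>\<omega>. f \<omega> + g \<omega>)"
proof -
  obtain s where s: "\<forall>n. simple_function M (s n)" "AE \<omega> in M. (\<lambda>n. s n \<omega>) \<longlonglongrightarrow> f \<omega>"
    using assms(1) unfolding strongly_measurable_def by blast
  obtain t where t: "\<forall>n. simple_function M (t n)" "AE \<omega> in M. (\<lambda>n. t n \<omega>) \<longlonglongrightarrow> g \<omega>"
    using assms(2) unfolding strongly_measurable_def by blast
  show ?thesis unfolding strongly_measurable_def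
    apply (rule exI[of _ "\<lambda>n \<omega>. s n \<omega> + t n \<omega>"])
    using s t by (auto intro: simple_function_compose2 tendsto_add)
qed

lemma sm_minus:
  assumes "strongly_measurable M f" "strongly_measurable M g"
  shows "strongly_measurable M (\<lambda>\<omega>. f \<omega> - g \<omega>)"
proof -
  obtain s where s: "\<forall>n. simple_function M (s n)" "AE \<omega> in M. (\<lambda>n. s n \<omega>) \<longlonglongrightarrow> f \<omega>"
    using assms(1) unfolding strongly_measurable_def by blast
  obtain t where t: "\<forall>n. simple_function M (t n)" "AE \<omega> in M. (\<lambda>n. t n \<omega>) \<longlonglongrightarrow> g \<omega>"
    using assms(2) unfolding strongly_measurable_def by blast
  show ?thesis unfolding strongly_measurable_def
    apply (rule exI[of _ "\<lambda>n \<omega>. s n \<omega> - t n \<omega>"])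
    using s t by (auto intro: simple_function_compose2 tendsto_diff)
qed

lemma sm_scale:
  assumes "strongly_measurable M f"
  shows "strongly_measurable M (\<lambda>\<omega>. c *\<^sub>R f \<omega>)"
proof -
  obtain s where s: "\<forall>n. simple_function M (s n)" "AE \<omega> in M. (\<lambda>n. s n \<omega>) \<longlonglongrightarrow> f \<omega>"
    using assms(1) unfolding strongly_measurable_def by blast
  show ?thesis unfolding strongly_measurable_def
    apply (rule exI[of _ "\<lambda>n \<omega>. c *\<^sub>R s n \<omega>"])
    using s by (auto intro: simple_function_compose1 elim!: eventually_mono intro: tendsto_scaleR[OF tendsto_const])
qed

lemma sm_ind:
  assumes "strongly_measurable M f" "E \<in> sets M"
  shows "strongly_measurable M (\<lambda>\<omega>. indicator E \<omega> *\<^sub>R f \<omega>)"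
proof -
  obtain s where s: "\<forall>n. simple_function M (s n)" "AE \<omega> in M. (\<lambda>n. s n \<omega>) \<longlonglongrightarrow> f \<omega>"
    using assms(1) unfolding strongly_measurable_def by blast
  show ?thesis unfolding strongly_measurable_def
    apply (rule exI[of _ "\<lambda>n \<omega>. indicator E \<omega> *\<^sub>R s n \<omega>"])
    using s assms(2) by (auto intro: simple_function_compose2 elim!: eventually_mono intro: tendsto_scaleR[OF tendsto_const])
qed

lemma sm_const: "strongly_measurable M (\<lambda>\<omega>. c)"
  by (rule sm_simple) simp

lemma sigma_finite_subset: "sigma_finite_set M S \<Longrightarrow> S \<in> sets M"
  unfolding sigma_finite_set_def by auto

lemma meas_rep:
  fixes \<phi> :: "'a \<Rightarrow> 'b::banach \<Rightarrow> ennreal"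
  assumes orl: "orlicz_integrand M \<phi>" and S: "sigma_finite_set M S"
    and v: "strongly_measurable M v"
  shows "\<exists>f\<in>borel_measurable M. (\<forall>\<omega>. \<omega> \<notin> S \<longrightarrow> f \<omega> = 0) \<and>
           (AE \<omega> in M. \<omega> \<in> S \<longrightarrow> \<phi> \<omega> (v \<omega>) = f \<omega>)"
proof -
  obtain s where s: "\<forall>n. simple_function M (s n)" "AE \<omega> in M. (\<lambda>n. s n \<omega>) \<longlonglongrightarrow> v \<omega>"
    using v unfolding strongly_measurable_def by blast
  from s(2) obtain N where N: "{\<omega> \<in> space M. \<not> (\<lambda>n. s n \<omega>) \<longlonglongrightarrow> v \<omega>} \<subseteq> N"
     "emeasure M N = 0" "N \<in> sets M" by (rule AE_E)
  define s' where "s' n \<omega> = (if \<omega> \<in> N then 0 else s n \<omega>)" for n \<omega>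
  define v' where "v' \<omega> = (if \<omega> \<in> N then 0 else v \<omega>)" for \<omega>
  have sf: "simple_function M (s' n)" for n
    unfolding s'_def using s(1) N(3)
    by (intro simple_function_If_set) auto
  have lim: "(\<lambda>n. s' n \<omega>) \<longlonglongrightarrow> v' \<omega>" if "\<omega> \<in> space M" for \<omega>
    using N(1) that unfolding s'_def v'_def by auto
  have v'm: "v' \<in> borel_measurable M"
    by (rule borel_measurable_LIMSEQ_metric[OF borel_measurable_simple_function[OF sf] lim])
  define C where "C = (\<Union>n. s' n ` space M)"
  have cC: "countable C" unfolding C_def
  proof (rule countable_UN)
    fix n show "countable (s' n ` space M)" using sf[of n] by (intro countable_finite) (simp add: simple_function_def)
  qed simp
  have W: "v' \<omega> \<in> closure C" if "\<omega> \<in> space M" for \<omega>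
    unfolding closure_sequential
    by (rule exI[of _ "\<lambda>n. s' n \<omega>"]) (use lim[OF that] that in \<open>auto simp: C_def\<close>)
  have Ssets: "S \<in> sets M" using S by (rule sigma_finite_subset)
  have SA: "atoms_sigma_set M S \<and> S \<subseteq> space M \<and> separable_space (top_of_set (closure C))"
  proof (intro conjI)
    show "atoms_sigma_set M S" unfolding atoms_sigma_set_def
      by (rule exI[of _ "{}"], rule exI[of _ S]) (use S in auto)
  qed (use sets.sets_into_space[OF Ssets] sep_closure[OF cC] in auto)
  have phim: "(\<lambda>(\<omega>, x). \<phi> \<omega> x) \<in> borel_measurable (restrict_space M S \<Otimes>\<^sub>M restrict_space borel (closure C))"
    using orl SA unfolding orlicz_integrand_def by blast
  have pm: "(\<lambda>\<omega>. (\<omega>, v' \<omega>)) \<in> measurable (restrict_space M S) (restrict_space M S \<Otimes>\<^sub>M restrict_space borel (closure C))"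
  proof (rule measurable_Pair)
    show "(\<lambda>\<omega>. \<omega>) \<in> measurable (restrict_space M S) (restrict_space M S)" by simp
    show "v' \<in> measurable (restrict_space M S) (restrict_space borel (closure C))"
      apply (rule measurable_restrict_space2)
      subgoal using W by (auto simp: space_restrict_space)
      by (rule measurable_restrict_space1[OF v'm])
  qed
  have gm: "(\<lambda>\<omega>. \<phi> \<omega> (v' \<omega>)) \<in> borel_measurable (restrict_space M S)"
    using measurable_comp[OF pm phim] by (simp add: o_def)
  define f where "f \<omega> = \<phi> \<omega> (v' \<omega>) * indicator S \<omega>" for \<omega>
  have fm: "f \<in> borel_measurable M"
    unfolding f_def using gm Ssets
    by (subst borel_measurable_restrict_space_iff_ennreal[symmetric]) auto
  have "AE \<omega> in M. \<omega> \<notin> N"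
    using N(2,3) by (intro AE_I'[of N]) auto
  then have "AE \<omega> in M. \<omega> \<in> S \<longrightarrow> \<phi> \<omega> (v \<omega>) = f \<omega>"
    by eventually_elim (auto simp: f_def v'_def)
  then show ?thesis using fm by (auto simp: f_def intro!: bexI[of _ f])
qed



definition good :: "('b::real_normed_vector \<Rightarrow> ennreal) \<Rightarrow> bool" where
  "good p \<longleftrightarrow> p 0 = 0 \<and> (\<forall>x. p (- x) = p x) \<and>
        (\<forall>x y (t::real). 0 \<le> t \<and> t \<le> 1 \<longrightarrow>
            p (t *\<^sub>R x + (1 - t) *\<^sub>R y) \<le> ennreal t * p x + ennreal (1 - t) * p y) \<and>
        (p \<longlongrightarrow> 0) (at 0)"

lemma good_zero:
  fixes p :: "'b::real_normed_vector \<Rightarrow> ennreal" and e :: 'b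
  assumes e: "e \<noteq> 0" and ev: "\<forall>x. p (- x) = p x"
    and cv: "\<forall>x y (t::real). 0 \<le> t \<and> t \<le> 1 \<longrightarrow>
            p (t *\<^sub>R x + (1 - t) *\<^sub>R y) \<le> ennreal t * p x + ennreal (1 - t) * p y"
    and lim: "(p \<longlongrightarrow> 0) (at 0)"
  shows "p 0 = 0"
proof -
  define x where "x n = (1 / real (Suc n)) *\<^sub>R e" for n
  have l1: "(\<lambda>n. 1 / real (Suc n)) \<longlonglongrightarrow> 0"
    by (rule LIMSEQ_Suc[OF lim_const_over_n])
  have x0: "x \<longlonglongrightarrow> 0" unfolding x_def
    using tendsto_scaleR[OF l1 tendsto_const[of e]] by simp
  have "filterlim x (at 0) sequentially"
    using x0 e by (intro filterlim_atI) (auto simp: x_def)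
  then have px: "(\<lambda>n. p (x n)) \<longlonglongrightarrow> 0" using lim by (intro filterlim_compose[OF lim])
  have le: "p 0 \<le> p (x n)" for n
  proof -
    have "p 0 = p ((1/2::real) *\<^sub>R x n + (1 - 1/2) *\<^sub>R (- x n))" by (simp add: scaleR_right_diff_distrib) 
    also have "\<dots> \<le> ennreal (1/2) * p (x n) + ennreal (1 - 1/2) * p (- x n)"
      using cv[rule_format, of "1/2" "x n" "- x n"] by simp
    also have "\<dots> = (ennreal (1/2) + ennreal (1/2)) * p (x n)" using ev by (simp add: distrib_right)
    also have "ennreal (1/2) + ennreal (1/2) = 1"
      by (subst ennreal_plus[symmetric]) auto
    finally show ?thesis by simp
  qed
  have "p 0 \<le> 0" by (rule LIMSEQ_le_const[OF px]) (use le in auto)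
  then show ?thesis by simp
qed

lemma AE_good:
  fixes \<phi> :: "'a \<Rightarrow> 'b::banach \<Rightarrow> ennreal"
  assumes "orlicz_integrand M \<phi>" "(e::'b) \<noteq> 0"
  shows "AE \<omega> in M. good (\<phi> \<omega>)"
  using assms(1) unfolding orlicz_integrand_def good_def
  by (elim conjE, elim eventually_mono) (use good_zero[OF assms(2)] in blast)

lemma good_scale:
  assumes "good p" "0 \<le> t" "t \<le> 1"
  shows "p (t *\<^sub>R x) \<le> ennreal t * p x"
proof -
  have "p (t *\<^sub>R x) = p (t *\<^sub>R x + (1 - t) *\<^sub>R 0)" by simp
  also have "\<dots> \<le> ennreal t * p x + ennreal (1 - t) * p 0"
    using assms unfolding good_def by blast
  finally show ?thesis using assms(1) by (simp add: good_def)
qed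



lemma meas_rep2:
  fixes \<phi> :: "'a \<Rightarrow> 'b::banach \<Rightarrow> ennreal" and e :: 'b
  assumes orl: "orlicz_integrand M \<phi>" and e: "e \<noteq> 0" and S: "sigma_finite_set M S"
    and v: "strongly_measurable M v" and van: "AE \<omega> in M. \<omega> \<notin> S \<longrightarrow> v \<omega> = 0"
  shows "\<exists>f\<in>borel_measurable M. AE \<omega> in M. \<phi> \<omega> (v \<omega>) = f \<omega>"
proof -
  obtain f where f: "f \<in> borel_measurable M" "\<forall>\<omega>. \<omega> \<notin> S \<longrightarrow> f \<omega> = 0"
    "AE \<omega> in M. \<omega> \<in> S \<longrightarrow> \<phi> \<omega> (v \<omega>) = f \<omega>"
    using meas_rep[OF orl S v] by blast
  have "AE \<omega> in M. \<phi> \<omega> (v \<omega>) = f \<omega>"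
    using f(3) van AE_good[OF orl e]
    by eventually_elim (use f(2) in \<open>auto simp: good_def\<close>)
  then show ?thesis using f(1) by blast
qed

lemma lux_le:
  assumes "\<epsilon> > 0" "(\<integral>\<^sup>+ \<omega>. \<phi> \<omega> ((1 / \<epsilon>) *\<^sub>R v \<omega>) \<partial>M) \<le> 1"
  shows "lux_norm M \<phi> v \<le> ennreal \<epsilon>"
  unfolding lux_norm_def using assms by (intro Inf_lower) auto

lemma lux_exists:
  assumes "lux_norm M \<phi> v < c"
  shows "\<exists>\<alpha>>0. ennreal \<alpha> < c \<and> (\<integral>\<^sup>+ \<omega>. \<phi> \<omega> ((1 / \<alpha>) *\<^sub>R v \<omega>) \<partial>M) \<le> 1"
  using assms unfolding lux_norm_def Inf_less_iff by auto

lemma lux_small: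
  fixes \<phi> :: "'a \<Rightarrow> 'b::banach \<Rightarrow> ennreal" and e :: 'b
  assumes orl: "orlicz_integrand M \<phi>" and e: "e \<noteq> 0" and S: "sigma_finite_set M S"
    and v: "strongly_measurable M v" and van: "AE \<omega> in M. \<omega> \<notin> S \<longrightarrow> v \<omega> = 0"
    and lx: "lux_norm M \<phi> v < ennreal (t * \<epsilon>)" and t: "0 < t" "t \<le> 1" and \<epsilon>: "\<epsilon> > 0"
  shows "(\<integral>\<^sup>+ \<omega>. \<phi> \<omega> ((1 / \<epsilon>) *\<^sub>R v \<omega>) \<partial>M) \<le> ennreal t"
proof -
  obtain \<alpha> where \<alpha>: "\<alpha> > 0" "ennreal \<alpha> < ennreal (t * \<epsilon>)"
    "(\<integral>\<^sup>+ \<omega>. \<phi> \<omega> ((1 / \<alpha>) *\<^sub>R v \<omega>) \<partial>M) \<le> 1"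
    using lux_exists[OF lx] by blast
  have at: "\<alpha> < t * \<epsilon>" using \<alpha>(1,2) ennreal_less_iff[of \<alpha> "t * \<epsilon>"] by simp
  define c where "c = \<alpha> / \<epsilon>"
  have c: "0 \<le> c" "c \<le> t" using \<alpha>(1) \<epsilon> at by (auto simp: c_def field_simps)
  have c1: "c \<le> 1" using c t by simp
  obtain f where f: "f \<in> borel_measurable M" "AE \<omega> in M. \<phi> \<omega> ((1 / \<alpha>) *\<^sub>R v \<omega>) = f \<omega>"
  proof -
    have "AE \<omega> in M. \<omega> \<notin> S \<longrightarrow> (1/\<alpha>) *\<^sub>R v \<omega> = 0" using van by (auto elim!: eventually_mono)
    from meas_rep2[OF orl e S sm_scale[OF v] this] show ?thesis using that by blast
  qed
  have "AE \<omega> in M. \<phi> \<omega> ((1 / \<epsilon>) *\<^sub>R v \<omega>) \<le> ennreal c * f \<omega>"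
    using AE_good[OF orl e] f(2)
  proof eventually_elim
    case (elim \<omega>)
    have "(1 / \<epsilon>) *\<^sub>R v \<omega> = c *\<^sub>R ((1 / \<alpha>) *\<^sub>R v \<omega>)"
      using \<alpha>(1) \<epsilon> by (simp add: c_def)
    then show ?case using good_scale[OF elim(1) c(1) c1] elim(2) by metis
  qed
  then have "(\<integral>\<^sup>+ \<omega>. \<phi> \<omega> ((1 / \<epsilon>) *\<^sub>R v \<omega>) \<partial>M) \<le> (\<integral>\<^sup>+ \<omega>. ennreal c * f \<omega> \<partial>M)"
    by (rule nn_integral_mono_AE)
  also have "\<dots> = ennreal c * (\<integral>\<^sup>+ \<omega>. f \<omega> \<partial>M)" using f(1) by (rule nn_integral_cmult)
  also have "(\<integral>\<^sup>+ \<omega>. f \<omega> \<partial>M) = (\<integral>\<^sup>+ \<omega>. \<phi> \<omega> ((1 / \<alpha>) *\<^sub>R v \<omega>) \<partial>M)"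
    using f(2) by (intro nn_integral_cong_AE) (auto elim!: eventually_mono)
  also have "ennreal c * \<dots> \<le> ennreal c * 1" using \<alpha>(3) by (intro mult_left_mono) auto
  also have "\<dots> \<le> ennreal t" using c by simp
  finally show ?thesis .
qed

lemma lux_tri:
  fixes \<phi> :: "'a \<Rightarrow> 'b::banach \<Rightarrow> ennreal" and e :: 'b
  assumes orl: "orlicz_integrand M \<phi>" and e: "e \<noteq> 0" and S: "sigma_finite_set M S"
    and a: "strongly_measurable M a" and vana: "AE \<omega> in M. \<omega> \<notin> S \<longrightarrow> a \<omega> = 0"
    and b: "strongly_measurable M b" and vanb: "AE \<omega> in M. \<omega> \<notin> S \<longrightarrow> b \<omega> = 0"
    and la: "lux_norm M \<phi> a < \<infinity>" and lb: "lux_norm M \<phi> b < \<infinity>"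
  shows "lux_norm M \<phi> (\<lambda>\<omega>. a \<omega> - b \<omega>) < \<infinity>"
proof -
  obtain \<alpha> where \<alpha>: "\<alpha> > 0" "(\<integral>\<^sup>+ \<omega>. \<phi> \<omega> ((1 / \<alpha>) *\<^sub>R a \<omega>) \<partial>M) \<le> 1"
    using lux_exists[OF la] by blast
  obtain \<beta> where \<beta>: "\<beta> > 0" "(\<integral>\<^sup>+ \<omega>. \<phi> \<omega> ((1 / \<beta>) *\<^sub>R b \<omega>) \<partial>M) \<le> 1"
    using lux_exists[OF lb] by blast
  obtain fa where fa: "fa \<in> borel_measurable M" "AE \<omega> in M. \<phi> \<omega> ((1 / \<alpha>) *\<^sub>R a \<omega>) = fa \<omega>"
  proof -
    have "AE \<omega> in M. \<omega> \<notin> S \<longrightarrow> (1/\<alpha>) *\<^sub>R a \<omega> = 0" using vana by (auto elim!: eventually_mono)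
    from meas_rep2[OF orl e S sm_scale[OF a] this] show ?thesis using that by blast
  qed
  obtain fb where fb: "fb \<in> borel_measurable M" "AE \<omega> in M. \<phi> \<omega> ((1 / \<beta>) *\<^sub>R b \<omega>) = fb \<omega>"
  proof -
    have "AE \<omega> in M. \<omega> \<notin> S \<longrightarrow> (1/\<beta>) *\<^sub>R b \<omega> = 0" using vanb by (auto elim!: eventually_mono)
    from meas_rep2[OF orl e S sm_scale[OF b] this] show ?thesis using that by blast
  qed
  define t where "t = \<alpha> / (\<alpha> + \<beta>)"
  have t: "0 \<le> t" "t \<le> 1" "1 - t = \<beta> / (\<alpha> + \<beta>)" using \<alpha> \<beta> by (auto simp: t_def field_simps)
  have "AE \<omega> in M. \<phi> \<omega> ((1 / (\<alpha> + \<beta>)) *\<^sub>R (a \<omega> - b \<omega>)) \<le> ennreal t * fa \<omega> + ennreal (1 - t) * fb \<omega>"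
    using AE_good[OF orl e] fa(2) fb(2)
  proof eventually_elim
    case (elim \<omega>)
    have eq: "(1 / (\<alpha> + \<beta>)) *\<^sub>R (a \<omega> - b \<omega>) = t *\<^sub>R ((1 / \<alpha>) *\<^sub>R a \<omega>) + (1 - t) *\<^sub>R (- ((1 / \<beta>) *\<^sub>R b \<omega>))"
      using \<alpha>(1) \<beta>(1) t(3) by (simp add: t_def scaleR_diff_right)
    have "\<phi> \<omega> ((1 / (\<alpha> + \<beta>)) *\<^sub>R (a \<omega> - b \<omega>)) \<le> ennreal t * \<phi> \<omega> ((1 / \<alpha>) *\<^sub>R a \<omega>) + ennreal (1 - t) * \<phi> \<omega> (- ((1 / \<beta>) *\<^sub>R b \<omega>))"
      unfolding eq using elim(1) t(1,2) unfolding good_def by blast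
    also have "\<phi> \<omega> (- ((1 / \<beta>) *\<^sub>R b \<omega>)) = \<phi> \<omega> ((1 / \<beta>) *\<^sub>R b \<omega>)"
      using elim(1) unfolding good_def by blast
    finally show ?case using elim(2,3) by simp
  qed
  then have "(\<integral>\<^sup>+ \<omega>. \<phi> \<omega> ((1 / (\<alpha> + \<beta>)) *\<^sub>R (a \<omega> - b \<omega>)) \<partial>M) \<le> (\<integral>\<^sup>+ \<omega>. ennreal t * fa \<omega> + ennreal (1 - t) * fb \<omega> \<partial>M)"
    by (rule nn_integral_mono_AE)
  also have "\<dots> = ennreal t * (\<integral>\<^sup>+ \<omega>. fa \<omega> \<partial>M) + ennreal (1 - t) * (\<integral>\<^sup>+ \<omega>. fb \<omega> \<partial>M)"
    using fa(1) fb(1) by (simp add: nn_integral_add nn_integral_cmult)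
  also have "(\<integral>\<^sup>+ \<omega>. fa \<omega> \<partial>M) = (\<integral>\<^sup>+ \<omega>. \<phi> \<omega> ((1 / \<alpha>) *\<^sub>R a \<omega>) \<partial>M)"
    using fa(2) by (intro nn_integral_cong_AE) (auto elim!: eventually_mono)
  also have "(\<integral>\<^sup>+ \<omega>. fb \<omega> \<partial>M) = (\<integral>\<^sup>+ \<omega>. \<phi> \<omega> ((1 / \<beta>) *\<^sub>R b \<omega>) \<partial>M)"
    using fb(2) by (intro nn_integral_cong_AE) (auto elim!: eventually_mono)
  also have "ennreal t * (\<integral>\<^sup>+ \<omega>. \<phi> \<omega> ((1 / \<alpha>) *\<^sub>R a \<omega>) \<partial>M) + ennreal (1 - t) * (\<integral>\<^sup>+ \<omega>. \<phi> \<omega> ((1 / \<beta>) *\<^sub>R b \<omega>) \<partial>M)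
     \<le> ennreal t * 1 + ennreal (1 - t) * 1"
    using \<alpha>(2) \<beta>(2) by (intro add_mono mult_left_mono) auto
  also have "\<dots> = 1" using t by (simp flip: ennreal_plus)
  finally have "lux_norm M \<phi> (\<lambda>\<omega>. a \<omega> - b \<omega>) \<le> ennreal (\<alpha> + \<beta>)"
    using \<alpha>(1) \<beta>(1) by (intro lux_le) auto
  then show ?thesis using le_less_trans by fastforce
qed



lemma main_approx:
  fixes \<phi> :: "'a \<Rightarrow> 'b::banach \<Rightarrow> ennreal" and e :: 'b
  assumes orl: "orlicz_integrand M \<phi>" and e: "e \<noteq> 0" and uC: "u \<in> C_sigma_phi M \<phi>"
    and \<epsilon>: "\<epsilon> > 0"
  shows "\<exists>s. integrable_simple M s \<and> lux_norm M \<phi> (\<lambda>\<omega>. u \<omega> - s \<omega>) \<le> ennreal \<epsilon>"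
proof -
  have smu: "strongly_measurable M u" and lu: "lux_norm M \<phi> u < \<infinity>"
    using uC unfolding C_sigma_phi_def L_phi_def by auto
  obtain S where S: "sigma_finite_set M S" and van: "AE \<omega> in M. \<omega> \<notin> S \<longrightarrow> u \<omega> = 0"
    using uC unfolding C_sigma_phi_def vanishes_outside_sigma_finite_def by auto
  have Cprop: "\<And>E :: nat \<Rightarrow> 'a set. (\<forall>n. E n \<in> sets M) \<Longrightarrow>
         (AE \<omega> in M. (\<lambda>n. indicator (E n) \<omega> :: real) \<longlonglongrightarrow> 0) \<Longrightarrow>
         (\<lambda>n. lux_norm M \<phi> (\<lambda>\<omega>. indicator (E n) \<omega> *\<^sub>R u \<omega>)) \<longlonglongrightarrow> 0"
    using uC unfolding C_sigma_phi_def by blast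
  have Ssets: "S \<in> sets M" using S by (rule sigma_finite_subset)
  obtain F :: "nat \<Rightarrow> 'a set" where FF: "(\<forall>n. F n \<in> sets M \<and> emeasure M (F n) < \<infinity>) \<and> S = (\<Union>n. F n)"
    using S unfolding sigma_finite_set_def by blast
  note F0 = conjunct1[OF FF] and SF = conjunct2[OF FF]
  have F: "\<And>n. F n \<in> sets M" "\<And>n. emeasure M (F n) < \<infinity>" using F0 by auto
  define Fi where "Fi n = (\<Union>i\<in>{..n}. F i)" for n
  have Fi_sets[measurable]: "Fi n \<in> sets M" for n unfolding Fi_def using F(1) by (intro sets.finite_UN) auto
  have Fi_fin: "emeasure M (Fi n) < \<infinity>" for n
  proof -
    have "emeasure M (Fi n) \<le> (\<Sum>i\<in>{..n}. emeasure M (F i))"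
      unfolding Fi_def using F(1) by (intro emeasure_subadditive_finite) auto
    also have "\<dots> < \<infinity>" using F(2) by (simp add: sum_Pinfty less_top)
    finally show ?thesis .
  qed
  have Fi_sub: "Fi n \<subseteq> S" for n unfolding Fi_def SF by auto
  have [measurable]: "S \<in> sets M" by (rule Ssets)
  define E1 where "E1 n = S - Fi n" for n
  have E1_sets: "\<forall>n. E1 n \<in> sets M" unfolding E1_def by auto
  have E1_lim: "AE \<omega> in M. (\<lambda>n. indicator (E1 n) \<omega> :: real) \<longlonglongrightarrow> 0"
  proof (intro AE_I2)
    fix \<omega> show "(\<lambda>n. indicator (E1 n) \<omega> :: real) \<longlonglongrightarrow> 0"
    proof (cases "\<omega> \<in> S")
      case True
      then obtain i where "\<omega> \<in> F i" unfolding SF by auto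
      then have "\<forall>n\<ge>i. indicator (E1 n) \<omega> = (0::real)"
        unfolding E1_def Fi_def by (auto simp: indicator_def)
      then show ?thesis by (intro tendsto_eventually) (auto simp: eventually_sequentially)
    next
      case False
      then show ?thesis by (simp add: E1_def indicator_def)
    qed
  qed
  have "eventually (\<lambda>n. lux_norm M \<phi> (\<lambda>\<omega>. indicator (E1 n) \<omega> *\<^sub>R u \<omega>) < ennreal (1/4 * \<epsilon>)) sequentially"
    using \<epsilon> by (intro order_tendstoD(2)[OF Cprop[OF E1_sets E1_lim]]) auto
  then obtain N where N: "lux_norm M \<phi> (\<lambda>\<omega>. indicator (E1 N) \<omega> *\<^sub>R u \<omega>) < ennreal (1/4 * \<epsilon>)"
    by (auto simp: eventually_sequentially)
  define m where "m = enn2real (emeasure M (Fi N))"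
  have m: "emeasure M (Fi N) = ennreal m" "m \<ge> 0"
    using Fi_fin[of N] by (auto simp: m_def ennreal_enn2real_if less_top)
  define \<delta> where "\<delta> = 1 / (2 * (m + 1))"
  have \<delta>: "\<delta> > 0" "\<delta> * m \<le> 1/2" using m(2) by (auto simp: \<delta>_def field_simps)
  obtain sk where sk: "\<forall>k. simple_function M (sk k)" "AE \<omega> in M. (\<lambda>k. sk k \<omega>) \<longlonglongrightarrow> u \<omega>"
    using smu unfolding strongly_measurable_def by blast
  define C where "C = insert 0 (\<Union>k. sk k ` space M)"
  have cC: "countable C" unfolding C_def
  proof (intro countable_insert countable_UN)
    fix k show "countable (sk k ` space M)" using sk(1) by (intro countable_finite) (simp add: simple_function_def)
  qed simp
  define d where "d = from_nat_into C"
  have rd: "range d = C" unfolding d_def using cC by (simp add: C_def)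
  have approx: "AE \<omega> in M. \<forall>\<eta>>0. \<exists>j. norm (u \<omega> - d j) < \<eta>"
    using sk(2) AE_space
  proof eventually_elim
    case (elim \<omega>)
    show ?case
    proof (intro allI impI)
      fix \<eta> :: real assume "\<eta> > 0"
      then have "eventually (\<lambda>k. dist (sk k \<omega>) (u \<omega>) < \<eta>) sequentially"
        using elim(1) by (rule tendstoD[rotated])
      then obtain k where k: "dist (sk k \<omega>) (u \<omega>) < \<eta>" by (auto simp: eventually_sequentially)
      have "sk k \<omega> \<in> range d" unfolding rd C_def using elim(2) by auto
      then obtain j where "d j = sk k \<omega>" by auto
      then have "norm (u \<omega> - d j) < \<eta>" using k by (simp add: dist_norm norm_minus_commute)
      then show "\<exists>j. norm (u \<omega> - d j) < \<eta>" by blast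
    qed
  qed
  have "\<forall>j. \<exists>f. f \<in> borel_measurable M \<and> (AE \<omega> in M. \<omega> \<in> S \<longrightarrow> \<phi> \<omega> ((1/\<epsilon>) *\<^sub>R (u \<omega> - d j)) = f \<omega>)"
  proof
    fix j
    from meas_rep[OF orl S sm_scale[OF sm_minus[OF smu sm_const]], of "1/\<epsilon>" "d j"]
    show "\<exists>f. f \<in> borel_measurable M \<and> (AE \<omega> in M. \<omega> \<in> S \<longrightarrow> \<phi> \<omega> ((1/\<epsilon>) *\<^sub>R (u \<omega> - d j)) = f \<omega>)"
      by blast
  qed
  then obtain f where fm[measurable]: "\<And>j. f j \<in> borel_measurable M"
    and frep: "\<And>j. AE \<omega> in M. \<omega> \<in> S \<longrightarrow> \<phi> \<omega> ((1/\<epsilon>) *\<^sub>R (u \<omega> - d j)) = f j \<omega>"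
    by metis
  have frepall: "AE \<omega> in M. \<forall>j. \<omega> \<in> S \<longrightarrow> \<phi> \<omega> ((1/\<epsilon>) *\<^sub>R (u \<omega> - d j)) = f j \<omega>"
    by (rule AE_all_countable[THEN iffD2]) (use frep in blast)
  have goodAE: "AE \<omega> in M. \<omega> \<in> S \<longrightarrow> (\<exists>j. f j \<omega> < ennreal \<delta>)"
    using AE_good[OF orl e] approx frepall
  proof eventually_elim
    case (elim \<omega>)
    show ?case
    proof
      assume "\<omega> \<in> S"
      have lim: "(\<phi> \<omega> \<longlongrightarrow> 0) (at 0)" and z: "\<phi> \<omega> 0 = 0" using elim(1) by (auto simp: good_def)
      have "eventually (\<lambda>x. \<phi> \<omega> x < ennreal \<delta>) (at 0)"
        using \<delta>(1) by (intro order_tendstoD(2)[OF lim]) auto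
      then obtain r where r: "r > 0" "\<And>x. x \<noteq> 0 \<Longrightarrow> dist x 0 < r \<Longrightarrow> \<phi> \<omega> x < ennreal \<delta>"
        unfolding eventually_at by blast
      have r': "\<phi> \<omega> x < ennreal \<delta>" if "norm x < r" for x
        using r(2)[of x] that z \<delta>(1) by (cases "x = 0") auto
      obtain j where j: "norm (u \<omega> - d j) < r * \<epsilon>" using elim(2) mult_pos_pos[OF r(1) \<epsilon>] by blast
      have "norm ((1/\<epsilon>) *\<^sub>R (u \<omega> - d j)) = norm (u \<omega> - d j) / \<epsilon>"
        using \<epsilon> by (simp only: norm_scaleR) simp
      also have "\<dots> < r" using j \<epsilon> by (simp add: divide_less_eq mult.commute)
      finally have "norm ((1/\<epsilon>) *\<^sub>R (u \<omega> - d j)) < r" .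
      then have "\<phi> \<omega> ((1/\<epsilon>) *\<^sub>R (u \<omega> - d j)) < ennreal \<delta>" by (rule r')
      then show "\<exists>j. f j \<omega> < ennreal \<delta>" using elim(3) \<open>\<omega> \<in> S\<close> by metis
    qed
  qed
  define B where "B K = {\<omega>\<in>space M. \<forall>j\<in>{..K}. ennreal \<delta> < f j \<omega>}" for K
  have B_sets[measurable]: "B K \<in> sets M" for K unfolding B_def by measurable
  define E2 where "E2 K = B K \<inter> Fi N" for K
  have E2_sets: "\<forall>K. E2 K \<in> sets M" unfolding E2_def by auto
  have E2_lim: "AE \<omega> in M. (\<lambda>K. indicator (E2 K) \<omega> :: real) \<longlonglongrightarrow> 0"
    using goodAE
  proof eventually_elim
    case (elim \<omega>)
    show ?case
    proof (cases "\<omega> \<in> S")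
      case True
      then obtain j where j: "f j \<omega> < ennreal \<delta>" using elim by auto
      then have "\<forall>K\<ge>j. indicator (E2 K) \<omega> = (0::real)"
        unfolding E2_def B_def by (auto simp: indicator_def not_less) (meson atMost_iff less_imp_le not_le)
      then show ?thesis by (intro tendsto_eventually) (auto simp: eventually_sequentially)
    next
      case False
      then have "\<omega> \<notin> Fi N" using Fi_sub[of N] by auto
      then show ?thesis by (simp add: E2_def indicator_def)
    qed
  qed
  have "eventually (\<lambda>K. lux_norm M \<phi> (\<lambda>\<omega>. indicator (E2 K) \<omega> *\<^sub>R u \<omega>) < ennreal (1/4 * \<epsilon>)) sequentially"
    using \<epsilon> by (intro order_tendstoD(2)[OF Cprop[OF E2_sets E2_lim]]) auto
  then obtain K where K: "lux_norm M \<phi> (\<lambda>\<omega>. indicator (E2 K) \<omega> *\<^sub>R u \<omega>) < ennreal (1/4 * \<epsilon>)"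
    by (auto simp: eventually_sequentially)
  define G where "G = Fi N - B K"
  have G_sets[measurable]: "G \<in> sets M" unfolding G_def by auto
  define J where "J \<omega> = (LEAST j. f j \<omega> \<le> ennreal \<delta>)" for \<omega>
  have J_meas[measurable]: "J \<in> measurable M (count_space UNIV)"
    unfolding J_def by measurable
  define s where "s \<omega> = (if \<omega> \<in> G then d (J \<omega>) else 0)" for \<omega>
  have G_J: "f (J \<omega>) \<omega> \<le> ennreal \<delta> \<and> J \<omega> \<le> K" if hG: "\<omega> \<in> G" for \<omega>
  proof -
    have "\<omega> \<in> space M" using hG G_sets sets.sets_into_space by blast
    then obtain j where j: "j \<le> K" "f j \<omega> \<le> ennreal \<delta>"
      using hG unfolding G_def B_def by (auto simp: not_less)
    show ?thesis using LeastI[of "\<lambda>j. f j \<omega> \<le> ennreal \<delta>", OF j(2)] Least_le[of "\<lambda>j. f j \<omega> \<le> ennreal \<delta>", OF j(2)] j(1)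
      unfolding J_def by auto
  qed
  have s_meas: "s \<in> borel_measurable M"
  proof -
    have "(\<lambda>\<omega>. d (J \<omega>)) \<in> borel_measurable M"
      by (rule measurable_compose[OF J_meas]) simp
    then show ?thesis unfolding s_def by (intro measurable_If_set) auto
  qed
  have s_fin: "finite (s ` space M)"
  proof (rule finite_subset)
    show "s ` space M \<subseteq> insert 0 (d ` {..K})" using G_J unfolding s_def by auto
  qed simp
  have s_sf: "simple_function M s" by (rule simple_function_borel_measurable[OF s_meas s_fin])
  have s_is: "integrable_simple M s"
    unfolding integrable_simple_def using s_sf Fi_fin[of N] G_def
    by (intro conjI bexI[of _ "Fi N"]) (auto simp: s_def)
  let ?g1 = "\<lambda>\<omega>. \<phi> \<omega> ((1/\<epsilon>) *\<^sub>R (indicator (E1 N) \<omega> *\<^sub>R u \<omega>))"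
  let ?g2 = "\<lambda>\<omega>. \<phi> \<omega> ((1/\<epsilon>) *\<^sub>R (indicator (E2 K) \<omega> *\<^sub>R u \<omega>))"
  have pw: "AE \<omega> in M. \<phi> \<omega> ((1/\<epsilon>) *\<^sub>R (u \<omega> - s \<omega>)) \<le> ennreal \<delta> * indicator G \<omega> + ?g1 \<omega> + ?g2 \<omega>"
    using AE_space AE_good[OF orl e] van frepall
  proof eventually_elim
    case (elim \<omega>)
    have z: "\<phi> \<omega> 0 = 0" using elim(2) by (simp add: good_def)
    consider "\<omega> \<in> G" | "\<omega> \<in> E1 N" | "\<omega> \<in> E2 K" | "\<omega> \<notin> S"
      using elim(1) unfolding G_def E1_def E2_def by blast
    then show ?case
    proof cases
      case 1
      have "\<omega> \<in> S" using 1 Fi_sub unfolding G_def by auto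
      then have "\<phi> \<omega> ((1/\<epsilon>) *\<^sub>R (u \<omega> - s \<omega>)) = f (J \<omega>) \<omega>"
        using elim(4) 1 unfolding s_def by auto
      also have "\<dots> \<le> ennreal \<delta>" using G_J[OF 1] by auto
      also have "\<dots> = ennreal \<delta> * indicator G \<omega>" using 1 by simp
      also have "\<dots> \<le> ennreal \<delta> * indicator G \<omega> + ?g1 \<omega> + ?g2 \<omega>"
        by (simp add: add.assoc)
      finally show ?thesis .
    next
      case 2
      then have "\<omega> \<notin> G" "\<omega> \<notin> E2 K" unfolding G_def E1_def E2_def by auto
      then show ?thesis using 2 by (simp add: s_def)
    next
      case 3
      then have "\<omega> \<notin> G" "\<omega> \<notin> E1 N" unfolding G_def E1_def E2_def by auto
      then show ?thesis using 3 by (simp add: s_def)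
    next
      case 4
      then have "\<omega> \<notin> G" using Fi_sub unfolding G_def by auto
      then show ?thesis using 4 elim(3) z by (simp add: s_def)
    qed
  qed
  have van1: "AE \<omega> in M. \<omega> \<notin> S \<longrightarrow> indicator (E1 N) \<omega> *\<^sub>R u \<omega> = 0"
    using van by (auto elim!: eventually_mono)
  have van2: "AE \<omega> in M. \<omega> \<notin> S \<longrightarrow> indicator (E2 K) \<omega> *\<^sub>R u \<omega> = 0"
    using van by (auto elim!: eventually_mono)
  have sm1: "strongly_measurable M (\<lambda>\<omega>. indicator (E1 N) \<omega> *\<^sub>R u \<omega>)"
    using E1_sets by (intro sm_ind smu) auto
  have sm2: "strongly_measurable M (\<lambda>\<omega>. indicator (E2 K) \<omega> *\<^sub>R u \<omega>)"
    using E2_sets by (intro sm_ind smu) auto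
  have "AE \<omega> in M. \<omega> \<notin> S \<longrightarrow> (1/\<epsilon>) *\<^sub>R (indicator (E1 N) \<omega> *\<^sub>R u \<omega>) = 0"
    using van by (auto elim!: eventually_mono)
  from meas_rep2[OF orl e S sm_scale[OF sm1] this]
  obtain r1 where r1: "r1 \<in> borel_measurable M" "AE \<omega> in M. ?g1 \<omega> = r1 \<omega>" by blast
  have "AE \<omega> in M. \<omega> \<notin> S \<longrightarrow> (1/\<epsilon>) *\<^sub>R (indicator (E2 K) \<omega> *\<^sub>R u \<omega>) = 0"
    using van by (auto elim!: eventually_mono)
  from meas_rep2[OF orl e S sm_scale[OF sm2] this]
  obtain r2 where r2: "r2 \<in> borel_measurable M" "AE \<omega> in M. ?g2 \<omega> = r2 \<omega>" by blast
  have i1: "(\<integral>\<^sup>+ \<omega>. ?g1 \<omega> \<partial>M) \<le> ennreal (1/4)"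
    using lux_small[OF orl e S sm1 van1 _ _ _ \<epsilon>, of "1/4"] N by simp
  have i2: "(\<integral>\<^sup>+ \<omega>. ?g2 \<omega> \<partial>M) \<le> ennreal (1/4)"
    using lux_small[OF orl e S sm2 van2 _ _ _ \<epsilon>, of "1/4"] K by simp
  have hG12: "ennreal \<delta> * emeasure M G \<le> ennreal (1/2)"
  proof -
    have "emeasure M G \<le> emeasure M (Fi N)" unfolding G_def by (intro emeasure_mono) auto
    then have "ennreal \<delta> * emeasure M G \<le> ennreal \<delta> * ennreal m" using m(1) by (intro mult_left_mono) auto
    also have "\<dots> = ennreal (\<delta> * m)" using \<delta>(1) m(2) by (simp add: ennreal_mult)
    also have "\<dots> \<le> ennreal (1/2)" using \<delta>(2) by (intro ennreal_leI)
    finally show ?thesis .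
  qed
  have "(\<integral>\<^sup>+ \<omega>. \<phi> \<omega> ((1/\<epsilon>) *\<^sub>R (u \<omega> - s \<omega>)) \<partial>M) \<le> (\<integral>\<^sup>+ \<omega>. ennreal \<delta> * indicator G \<omega> + ?g1 \<omega> + ?g2 \<omega> \<partial>M)"
    using pw by (rule nn_integral_mono_AE)
  also have "\<dots> = (\<integral>\<^sup>+ \<omega>. ennreal \<delta> * indicator G \<omega> + r1 \<omega> + r2 \<omega> \<partial>M)"
    by (intro nn_integral_cong_AE) (use r1(2) r2(2) in \<open>eventually_elim, simp\<close>)
  also have "\<dots> = ennreal \<delta> * emeasure M G + (\<integral>\<^sup>+ \<omega>. r1 \<omega> \<partial>M) + (\<integral>\<^sup>+ \<omega>. r2 \<omega> \<partial>M)"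
    using r1(1) r2(1) by (simp add: nn_integral_add nn_integral_cmult_indicator)
  also have "(\<integral>\<^sup>+ \<omega>. r1 \<omega> \<partial>M) = (\<integral>\<^sup>+ \<omega>. ?g1 \<omega> \<partial>M)"
    using r1(2) by (intro nn_integral_cong_AE) (auto elim!: eventually_mono)
  also have "(\<integral>\<^sup>+ \<omega>. r2 \<omega> \<partial>M) = (\<integral>\<^sup>+ \<omega>. ?g2 \<omega> \<partial>M)"
    using r2(2) by (intro nn_integral_cong_AE) (auto elim!: eventually_mono)
  also have "ennreal \<delta> * emeasure M G + (\<integral>\<^sup>+ \<omega>. ?g1 \<omega> \<partial>M) + (\<integral>\<^sup>+ \<omega>. ?g2 \<omega> \<partial>M)
     \<le> ennreal (1/2) + (\<integral>\<^sup>+ \<omega>. ?g1 \<omega> \<partial>M) + (\<integral>\<^sup>+ \<omega>. ?g2 \<omega> \<partial>M)"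
    using hG12 by (intro add_mono) auto
  also have "ennreal (1/2) + (\<integral>\<^sup>+ \<omega>. ?g1 \<omega> \<partial>M) + (\<integral>\<^sup>+ \<omega>. ?g2 \<omega> \<partial>M) \<le> ennreal (1/2) + ennreal (1/4) + ennreal (1/4)"
    using i1 i2 by (intro add_mono) auto
  also have "\<dots> = ennreal (1/2 + 1/4 + 1/4)" by (simp only: ennreal_plus[symmetric])
  also have "\<dots> = 1" by simp
  finally have "lux_norm M \<phi> (\<lambda>\<omega>. u \<omega> - s \<omega>) \<le> ennreal \<epsilon>" using \<epsilon> by (intro lux_le) 
  then show ?thesis using s_is by blast
qed



lemma final_from:
  assumes H: "\<forall>u\<in>C_sigma_phi M \<phi>. \<exists>s. (\<forall>n::nat. integrable_simple M (s n) \<and> s n \<in> L_phi M \<phi>) \<and>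
              ((\<lambda>n. lux_norm M \<phi> (\<lambda>\<omega>. u \<omega> - s n \<omega>)) \<longlonglongrightarrow> 0)"
  shows "C_sigma_phi M \<phi> \<subseteq> E_sigma_phi M \<phi> \<and>
         (real_valued_integrand M \<phi> \<longrightarrow>
           (\<forall>u \<in> C_sigma_phi M \<phi>. \<exists>s. (\<forall>n::nat. integrable_simple M (s n)) \<and>
              ((\<lambda>n. lux_norm M \<phi> (\<lambda>\<omega>. u \<omega> - s n \<omega>)) \<longlonglongrightarrow> 0)))"
proof (intro conjI impI)
  show "C_sigma_phi M \<phi> \<subseteq> E_sigma_phi M \<phi>"
  proof
    fix u assume u: "u \<in> C_sigma_phi M \<phi>"
    then obtain s where s: "\<forall>n::nat. integrable_simple M (s n) \<and> s n \<in> L_phi M \<phi>"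
      "(\<lambda>n. lux_norm M \<phi> (\<lambda>\<omega>. u \<omega> - s n \<omega>)) \<longlonglongrightarrow> 0" using H by blast
    show "u \<in> E_sigma_phi M \<phi>"
      using u s unfolding E_sigma_phi_def E_phi_def C_sigma_phi_def integrable_simple_def
      by blast
  qed
  show "\<forall>u \<in> C_sigma_phi M \<phi>. \<exists>s. (\<forall>n::nat. integrable_simple M (s n)) \<and>
              ((\<lambda>n. lux_norm M \<phi> (\<lambda>\<omega>. u \<omega> - s n \<omega>)) \<longlonglongrightarrow> 0)"
    using H by blast
qed

lemma sigma_finite_Un:
  assumes "sigma_finite_set M S" "F \<in> sets M" "emeasure M F < \<infinity>"
  shows "sigma_finite_set M (S \<union> F)"
proof -
  obtain G :: "nat \<Rightarrow> 'a set" where G: "\<forall>n. G n \<in> sets M \<and> emeasure M (G n) < \<infinity>" "S = (\<Union>n. G n)"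
    using assms(1) unfolding sigma_finite_set_def by blast
  have "emeasure M (G n \<union> F) < \<infinity>" for n
  proof -
    have "emeasure M (G n \<union> F) \<le> emeasure M (G n) + emeasure M F"
      using G assms by (intro emeasure_subadditive) auto
    also have "\<dots> < \<infinity>" using G assms by (simp add: less_top)
    finally show ?thesis .
  qed
  then show ?thesis unfolding sigma_finite_set_def using G assms
    by (intro exI[of _ "\<lambda>n. G n \<union> F"]) auto
qed




lemma nontrivial_case:
  fixes \<phi> :: "'a \<Rightarrow> 'b::banach \<Rightarrow> ennreal" and e :: 'b
  assumes orl: "orlicz_integrand M \<phi>" and e: "e \<noteq> 0" and uC: "u \<in> C_sigma_phi M \<phi>"
  shows "\<exists>s. (\<forall>n::nat. integrable_simple M (s n) \<and> s n \<in> L_phi M \<phi>) \<and>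
              ((\<lambda>n. lux_norm M \<phi> (\<lambda>\<omega>. u \<omega> - s n \<omega>)) \<longlonglongrightarrow> 0)"
proof -
  have "\<forall>n::nat. \<exists>s. integrable_simple M s \<and> lux_norm M \<phi> (\<lambda>\<omega>. u \<omega> - s \<omega>) \<le> ennreal (1 / real (Suc n))"
    using main_approx[OF orl e uC] by simp
  from choice[OF this] obtain s where s0: "\<forall>n. integrable_simple M (s n) \<and>
     lux_norm M \<phi> (\<lambda>\<omega>. u \<omega> - s n \<omega>) \<le> ennreal (1 / real (Suc n))"
    by blast
  have s: "\<And>n. integrable_simple M (s n)"
    "\<And>n. lux_norm M \<phi> (\<lambda>\<omega>. u \<omega> - s n \<omega>) \<le> ennreal (1 / real (Suc n))"
    using s0 by auto
  have smu: "strongly_measurable M u" and lu: "lux_norm M \<phi> u < \<infinity>"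
    using uC unfolding C_sigma_phi_def L_phi_def by auto
  obtain S where S: "sigma_finite_set M S" and van: "AE \<omega> in M. \<omega> \<notin> S \<longrightarrow> u \<omega> = 0"
    using uC unfolding C_sigma_phi_def vanishes_outside_sigma_finite_def by auto
  have L: "s n \<in> L_phi M \<phi>" for n
  proof -
    obtain F where F: "F \<in> sets M" "emeasure M F < \<infinity>" "\<forall>\<omega>\<in>space M - F. s n \<omega> = 0"
      and sf: "simple_function M (s n)"
      using s(1)[of n] unfolding integrable_simple_def by blast
    have S': "sigma_finite_set M (S \<union> F)" by (rule sigma_finite_Un[OF S F(1,2)])
    have smsn: "strongly_measurable M (s n)" by (rule sm_simple[OF sf])
    have vu: "AE \<omega> in M. \<omega> \<notin> S \<union> F \<longrightarrow> u \<omega> = 0" using van by (auto elim!: eventually_mono)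
    have vb: "AE \<omega> in M. \<omega> \<notin> S \<union> F \<longrightarrow> u \<omega> - s n \<omega> = 0"
      using van AE_space by eventually_elim (use F(3) in auto)
    have lb: "lux_norm M \<phi> (\<lambda>\<omega>. u \<omega> - s n \<omega>) < \<infinity>"
      using s(2)[of n] le_less_trans by fastforce
    have "lux_norm M \<phi> (\<lambda>\<omega>. u \<omega> - (u \<omega> - s n \<omega>)) < \<infinity>"
      by (rule lux_tri[OF orl e S' smu vu sm_minus[OF smu smsn] vb lu lb])
    then have "lux_norm M \<phi> (s n) < \<infinity>" by simp
    then show ?thesis unfolding L_phi_def using smsn by simp
  qed
  have lim: "(\<lambda>n. lux_norm M \<phi> (\<lambda>\<omega>. u \<omega> - s n \<omega>)) \<longlonglongrightarrow> 0"
  proof (rule tendsto_sandwich[OF _ _ tendsto_const])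
    have "(\<lambda>n. 1 / real (Suc n)) \<longlonglongrightarrow> 0" by (rule LIMSEQ_Suc[OF lim_const_over_n])
    then show "(\<lambda>n. ennreal (1 / real (Suc n))) \<longlonglongrightarrow> 0"
      using tendsto_ennrealI by fastforce
  qed (use s(2) in auto)
  show ?thesis
    by (rule exI[of _ s]) (use s(1) L lim in simp)
qed

lemma trivial_case:
  fixes \<phi> :: "'a \<Rightarrow> 'b::banach \<Rightarrow> ennreal"
  assumes triv: "\<forall>x::'b. x = 0" and uC: "u \<in> C_sigma_phi M \<phi>"
  shows "\<exists>s. (\<forall>n::nat. integrable_simple M (s n) \<and> s n \<in> L_phi M \<phi>) \<and>
              ((\<lambda>n. lux_norm M \<phi> (\<lambda>\<omega>. u \<omega> - s n \<omega>)) \<longlonglongrightarrow> 0)"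
proof -
  have uL: "u \<in> L_phi M \<phi>" using uC unfolding C_sigma_phi_def by auto
  have u0: "u = (\<lambda>\<omega>. 0)" using triv by (intro ext) blast
  have lu: "lux_norm M \<phi> u < \<infinity>" using uL unfolding L_phi_def by auto
  obtain \<alpha> where "\<alpha> > 0" "(\<integral>\<^sup>+ \<omega>. \<phi> \<omega> ((1 / \<alpha>) *\<^sub>R u \<omega>) \<partial>M) \<le> 1"
    using lux_exists[OF lu] by blast
  moreover have "(\<lambda>\<omega>. \<phi> \<omega> ((1 / \<alpha>) *\<^sub>R u \<omega>)) = (\<lambda>\<omega>. \<phi> \<omega> 0)"
    unfolding u0 by simp
  ultimately have I: "(\<integral>\<^sup>+ \<omega>. \<phi> \<omega> 0 \<partial>M) \<le> 1" by simp
  have "lux_norm M \<phi> u \<le> ennreal \<epsilon>" if "\<epsilon> > 0" for \<epsilon>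
  proof (rule lux_le)
    show "\<epsilon> > 0" by (rule that)
    have "(\<lambda>\<omega>. \<phi> \<omega> ((1 / \<epsilon>) *\<^sub>R u \<omega>)) = (\<lambda>\<omega>. \<phi> \<omega> 0)"
      unfolding u0 by simp
    then show "(\<integral>\<^sup>+ \<omega>. \<phi> \<omega> ((1 / \<epsilon>) *\<^sub>R u \<omega>) \<partial>M) \<le> 1" using I by simp
  qed
  note hle = this
  have "lux_norm M \<phi> u \<le> 0"
  proof (rule ennreal_le_epsilon)
    fix e :: real assume "0 < e"
    then show "lux_norm M \<phi> u \<le> 0 + ennreal e" using hle[of e] by simp
  qed
  then have l0: "lux_norm M \<phi> u = 0" by simp
  have is0: "integrable_simple M (\<lambda>\<omega>. 0::'b)" unfolding integrable_simple_def
  proof (intro conjI bexI[of _ "{}"])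
    show "simple_function M (\<lambda>\<omega>. 0::'b)" by simp
  qed auto
  have L0: "(\<lambda>\<omega>. 0::'b) \<in> L_phi M \<phi>" using uL u0 by simp
  have lim: "(\<lambda>n::nat. lux_norm M \<phi> (\<lambda>\<omega>. u \<omega> - 0)) \<longlonglongrightarrow> 0"
    using l0 by simp
  show ?thesis
    by (intro exI[of _ "\<lambda>(n::nat) \<omega>. 0::'b"] conjI allI) (fact is0, fact L0, fact lim)
qed

theorem lemma3p4p9:
  fixes M :: "'a measure" and \<phi> :: "'a \<Rightarrow> 'b::banach \<Rightarrow> ennreal"
  assumes "emeasure M (space M) \<noteq> 0"
    and "orlicz_integrand M \<phi>"
  shows "C_sigma_phi M \<phi> \<subseteq> E_sigma_phi M \<phi> \<and>
         (real_valued_integrand M \<phi> \<longrightarrow>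
           (\<forall>u \<in> C_sigma_phi M \<phi>. \<exists>s. (\<forall>n::nat. integrable_simple M (s n)) \<and>
              ((\<lambda>n. lux_norm M \<phi> (\<lambda>\<omega>. u \<omega> - s n \<omega>)) \<longlonglongrightarrow> 0)))"
proof (rule final_from, intro ballI)
  fix u assume u: "u \<in> C_sigma_phi M \<phi>"
  show "\<exists>s. (\<forall>n::nat. integrable_simple M (s n) \<and> s n \<in> L_phi M \<phi>) \<and>
              ((\<lambda>n. lux_norm M \<phi> (\<lambda>\<omega>. u \<omega> - s n \<omega>)) \<longlonglongrightarrow> 0)"
  proof (cases "\<forall>x::'b. x = 0")
    case True
    show ?thesis by (rule trivial_case[OF True u])
  next
    case False
    then obtain e :: 'b where "e \<noteq> 0" by blast
    then show ?thesis by (rule nontrivial_case[OF assms(2) _ u])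
  qed
qed


end
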